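(* Consider the looped Markov chain $\mathcal{G}'$ described in the context, with parameters $r\ge1$, $p,p_c\in[0,1]$, and let $\nu=p\cdot p_c$ with $\nu\cdot r<1$. Then $m_\sharp(s_i^\alpha)\in\Theta(\nu^{-t})$ for $\alpha=\alpha_1\cdots\alpha_t$, i.e. there are constants $0<c_1\le c_2<\infty$ depending only on $r,p,p_c$ such that $c_1\nu^{-t}\le m_\sharp(s_i^\alpha)\le c_2\nu^{-t}$ for all $t\ge0$, all $\alpha\in\{1,\ldots,r\}^t$ and all $1\le i\le r$.
   Context: Fix an integer $r\ge1$ and probabilities $p,p_c\in[0,1]$. Words $\alpha\in\{1,\ldots,r\}^*$ (finite sequences, $\varepsilon$ empty word, $\alpha\cdot i$ concatenation, $r^k$ the word of $k$ letters $r$) are called blocks. The Markov chain $\mathcal{G}'$ has the countable state space $\{s_i^\alpha, c_i^\alpha : 1\le i\le r,\ \alpha\in\{1,\ldots,r\}^*\}\cup\{\sharp\}$, initial state $\sharp$, and transition probabilities (all unlisted ones are $0$): $p(\sharp,s_1^\varepsilon)=1$; $p(s_i^\alpha,c_i^\alpha)=p$ for $1\le i\le r$; $p(s_i^\alpha,s_{i+1}^\alpha)=1-p$ for $1\le i<r$; $p(c_i^\alpha,s_1^{\alpha\cdot i})=p_c$ for $1\le i\le r$; $p(c_i^\alpha,s_{i+1}^\alpha)=1-p_c$ for $1\le i<r$; for every word $\gamma=\beta\cdot i\cdot r^k$ with $1\le i<r$, $k\ge0$: $p(s_r^\gamma,s_{i+1}^\beta)=1-p$, $p(c_r^\gamma,s_{i+1}^\beta)=1-p_c$;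 for every $\gamma\in r^*$ (including $\varepsilon$): $p(s_r^\gamma,\sharp)=1-p$, $p(c_r^\gamma,\sharp)=1-p_c$. For states $x,y$, $m_x(y)$ denotes the expected value of $\inf\{n\ge0: X_n=y\}$ for the chain $(X_n)$ started at $X_0=x$. *)

theory Defs
  imports "HOL-Analysis.Analysis"
begin

text \<open>States of the looped chain G': the initial state sharp, s_i^alpha and c_i^alpha.
  Blocks alpha are words over {1..r}, represented as lists of naturals (letters in {1..r}).\<close>
datatype state = Sharp | S nat "nat list" | C nat "nat list"

text \<open>Return target of s_r^gamma / c_r^gamma: for gamma = beta.i.r^k with i < r it is
  s_{i+1}^beta; for gamma in r^* it is sharp.\<close>
definition ret :: "nat \<Rightarrow> nat list \<Rightarrow> state" where
  "ret r \<gamma> = (let \<gamma>' = rev (dropWhile (\<lambda>x. x = r) (rev \<gamma>)) in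
      if \<gamma>' = [] then Sharp else S (last \<gamma>' + 1) (butlast \<gamma>'))"

definition nxt :: "nat \<Rightarrow> nat \<Rightarrow> nat list \<Rightarrow> state" where
  "nxt r i \<alpha> = (if i < r then S (i + 1) \<alpha> else ret r \<alpha>)"

text \<open>Transition probabilities of G' (the listed targets are pairwise distinct, so the
  sum form gives exactly the listed probabilities, all others 0).\<close>
definition trans :: "nat \<Rightarrow> real \<Rightarrow> real \<Rightarrow> state \<Rightarrow> state \<Rightarrow> real" where
  "trans r p pc x y = (case x of
       Sharp \<Rightarrow> (if y = S 1 [] then 1 else 0)
     | S i \<alpha> \<Rightarrow> (if y = C i \<alpha> then p else 0) + (if y = nxt r i \<alpha> then 1 - p else 0)
     | C i \<alpha> \<Rightarrow> (if y = S 1 (\<alpha> @ [i]) then pc else 0) + (if y = nxt r i \<alpha> then 1 - pc else 0))"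

text \<open>First-passage probabilities: fp n x y = P_x(inf{n >= 0. X_n = y} = n),
  i.e. the total probability of paths from x of length n that visit y first at step n.\<close>
fun fp :: "nat \<Rightarrow> real \<Rightarrow> real \<Rightarrow> nat \<Rightarrow> state \<Rightarrow> state \<Rightarrow> ennreal" where
  "fp r p pc 0 x y = (if x = y then 1 else 0)"
| "fp r p pc (Suc n) x y =
     (if x = y then 0 else (\<Sum>\<^sub>\<infinity>z. ennreal (trans r p pc x z) * fp r p pc n z y))"

text \<open>Expected hitting time m_x(y) = E_x[inf{n >= 0. X_n = y}] with values in [0,\<infinity>]:
  the sum of n * P(T = n) plus \<infinity> * P(T = \<infinity>).\<close>
definition hit_time :: "nat \<Rightarrow> real \<Rightarrow> real \<Rightarrow> state \<Rightarrow> state \<Rightarrow> ennreal" where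
  "hit_time r p pc x y =
     (\<Sum>n. of_nat n * fp r p pc n x y) + (if (\<Sum>n. fp r p pc n x y) < 1 then \<infinity> else 0)"

end

theory Submission
  imports Defs
begin


lemma infsum_point:
  "(\<Sum>\<^sub>\<infinity>z. ennreal (if z = a then c else 0) * f z) = ennreal c * (f a :: ennreal)"
proof -
  have "(\<Sum>\<^sub>\<infinity>z. ennreal (if z = a then c else 0) * f z) = (\<Sum>\<^sub>\<infinity>z\<in>{a}. ennreal (if z = a then c else 0) * f z)"
    by (rule infsum_cong_neutral) auto
  also have "\<dots> = ennreal c * f a" by simp
  finally show ?thesis .
qed

lemma infsum_two:
  assumes "0 \<le> c" "0 \<le> d"
  shows "(\<Sum>\<^sub>\<infinity>z. ennreal ((if z = a then c else 0) + (if z = b then d else 0)) * f z)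
     = ennreal c * f a + ennreal d * (f b :: ennreal)"
proof -
  have "(\<Sum>\<^sub>\<infinity>z. ennreal ((if z = a then c else 0) + (if z = b then d else 0)) * f z)
     = (\<Sum>\<^sub>\<infinity>z. ennreal (if z = a then c else 0) * f z + ennreal (if z = b then d else 0) * f z)"
  proof (rule infsum_cong)
    fix z
    have e: "ennreal ((if z = a then c else 0) + (if z = b then d else 0)) = ennreal (if z = a then c else 0) + ennreal (if z = b then d else 0)"
      by (rule ennreal_plus) (use assms in auto)
    show "ennreal ((if z = a then c else 0) + (if z = b then d else 0)) * f z = ennreal (if z = a then c else 0) * f z + ennreal (if z = b then d else 0) * f z"
      by (simp only: e distrib_right)
  qed
  also have "\<dots> = (\<Sum>\<^sub>\<infinity>z. ennreal (if z = a then c else 0) * f z) + (\<Sum>\<^sub>\<infinity>z. ennreal (if z = b then d else 0) * f z)"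
    by (intro infsum_add nonneg_summable_on_complete) auto
  finally show ?thesis by (simp add: infsum_point)
qed



locale mc =
  fixes r :: nat and p pc :: real
  assumes r1: "1 \<le> r" and p0: "0 \<le> p" and p1: "p \<le> 1" and c0: "0 \<le> pc" and c1: "pc \<le> 1"
    and nr: "p * pc * real r < 1"
begin

definition Pop :: "(state \<Rightarrow> real) \<Rightarrow> state \<Rightarrow> real" where
  "Pop f x = (case x of Sharp \<Rightarrow> f (S 1 [])
     | S i a \<Rightarrow> p * f (C i a) + (1 - p) * f (nxt r i a)
     | C i a \<Rightarrow> pc * f (S 1 (a @ [i])) + (1 - pc) * f (nxt r i a))"

lemma trans_sum:
  "(\<Sum>\<^sub>\<infinity>z. ennreal (trans r p pc x z) * g z) = (case x of Sharp \<Rightarrow> g (S 1 [])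
     | S i a \<Rightarrow> ennreal p * g (C i a) + ennreal (1 - p) * g (nxt r i a)
     | C i a \<Rightarrow> ennreal pc * g (S 1 (a @ [i])) + ennreal (1 - pc) * g (nxt r i a))"
proof (cases x)
  case Sharp
  then show ?thesis using infsum_point[of "S 1 []" 1 g] by (simp add: trans_def)
next
  case (S i a)
  then show ?thesis using infsum_two[of p "1-p" "C i a" "nxt r i a" g] p0 p1
    by (simp add: trans_def)
next
  case (C i a)
  then show ?thesis using infsum_two[of pc "1-pc" "S 1 (a @ [i])" "nxt r i a" g] c0 c1
    by (simp add: trans_def)
qed

lemma Pop_nonneg: "(\<And>z. 0 \<le> f z) \<Longrightarrow> 0 \<le> Pop f x"
  using p0 p1 c0 c1 by (auto simp: Pop_def split: state.split)

lemma conv_le1: "0 \<le> q \<Longrightarrow> q \<le> 1 \<Longrightarrow> u \<le> 1 \<Longrightarrow> v \<le> (1::real) \<Longrightarrow> q * u + (1 - q) * v \<le> 1"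
proof -
  assume a: "0 \<le> q" "q \<le> 1" "u \<le> 1" "v \<le> 1"
  have "q * u \<le> q * 1" by (rule mult_left_mono) (use a in auto)
  moreover have "(1 - q) * v \<le> (1 - q) * 1" by (rule mult_left_mono) (use a in auto)
  ultimately show ?thesis by simp
qed

lemma Pop_le1: "(\<And>z. f z \<le> 1) \<Longrightarrow> Pop f x \<le> 1"
  using p0 p1 c0 c1 by (auto simp: Pop_def split: state.split intro!: conv_le1)

lemma Pop_add: "Pop (\<lambda>z. f z + g z) x = Pop f x + Pop g x"
  by (auto simp: Pop_def algebra_simps split: state.split)
lemma Pop_diff: "Pop (\<lambda>z. f z - g z) x = Pop f x - Pop g x"
  by (auto simp: Pop_def algebra_simps split: state.split)
lemma Pop_cmult: "Pop (\<lambda>z. c * f z) x = c * Pop f x"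
  by (auto simp: Pop_def algebra_simps split: state.split)
lemma Pop_const: "Pop (\<lambda>z. c) x = c"
  by (auto simp: Pop_def algebra_simps split: state.split)
lemma Pop_sum: "Pop (\<lambda>z. \<Sum>k\<in>A. g k z) x = (\<Sum>k\<in>A. Pop (g k) x)"
  by (auto simp: Pop_def sum_distrib_left sum.distrib split: state.split)

fun fpr :: "state \<Rightarrow> nat \<Rightarrow> state \<Rightarrow> real" where
  "fpr y 0 x = (if x = y then 1 else 0)"
| "fpr y (Suc n) x = (if x = y then 0 else Pop (fpr y n) x)"

lemma fpr_nonneg: "0 \<le> fpr y n x"
  by (induction n arbitrary: x) (auto intro: Pop_nonneg)

lemma comb_enn:
  assumes "0 \<le> q" "q \<le> 1" "0 \<le> a" "0 \<le> b"
  shows "ennreal q * ennreal a + ennreal (1 - q) * ennreal b = ennreal (q * a + (1 - q) * b)"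
proof -
  have 1: "0 \<le> q * a" "0 \<le> (1 - q) * b" using assms by auto
  have "ennreal (q * a + (1 - q) * b) = ennreal (q * a) + ennreal ((1 - q) * b)"
    by (rule ennreal_plus[OF 1])
  also have "ennreal (q * a) = ennreal q * ennreal a" by (rule ennreal_mult) (use assms in auto)
  also have "ennreal ((1 - q) * b) = ennreal (1 - q) * ennreal b" by (rule ennreal_mult) (use assms in auto)
  finally show ?thesis by simp
qed

lemma fp_eq: "fp r p pc n x y = ennreal (fpr y n x)"
proof (induction n arbitrary: x)
  case 0
  then show ?case by simp
next
  case (Suc n)
  show ?case
  proof (cases "x = y")
    case True then show ?thesis by simp
  next
    case False
    have "fp r p pc (Suc n) x y = (\<Sum>\<^sub>\<infinity>z. ennreal (trans r p pc x z) * fp r p pc n z y)"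
      using False by simp
    also have "\<dots> = (\<Sum>\<^sub>\<infinity>z. ennreal (trans r p pc x z) * ennreal (fpr y n z))"
      using Suc.IH by simp
    also have "\<dots> = ennreal (Pop (fpr y n) x)"
    proof (cases x)
      case Sharp then show ?thesis by (simp add: trans_sum Pop_def)
    next
      case (S i a) then show ?thesis
        using comb_enn[OF p0 p1 fpr_nonneg fpr_nonneg] by (simp add: trans_sum Pop_def)
    next
      case (C i a) then show ?thesis
        using comb_enn[OF c0 c1 fpr_nonneg fpr_nonneg] by (simp add: trans_sum Pop_def)
    qed
    finally show ?thesis using False by simp
  qed
qed

definition Fr :: "state \<Rightarrow> nat \<Rightarrow> state \<Rightarrow> real" where
  "Fr y N x = (\<Sum>k\<le>N. fpr y k x)"

lemma Fr_0: "Fr y 0 x = (if x = y then 1 else 0)"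
  by (simp add: Fr_def)

lemma Fr_Suc: "Fr y (Suc N) x = (if x = y then 1 else Pop (Fr y N) x)"
  unfolding Fr_def sum.atMost_Suc_shift by (simp add: Pop_sum)

lemma Fr_nonneg: "0 \<le> Fr y N x"
  unfolding Fr_def by (simp add: fpr_nonneg sum_nonneg)

lemma Fr_le1: "Fr y N x \<le> 1"
  by (induction N arbitrary: x) (auto simp: Fr_0 Fr_Suc intro: Pop_le1)

lemma Fr_mono: "Fr y N x \<le> Fr y (Suc N) x"
  using fpr_nonneg[of y "Suc N" x] by (simp del: fpr.simps add: Fr_def)

definition Hr :: "state \<Rightarrow> nat \<Rightarrow> state \<Rightarrow> real" where
  "Hr y N x = (\<Sum>k<N. 1 - Fr y k x)"

lemma Hr_Suc: "Hr y (Suc N) x = (if x = y then 0 else 1 + Pop (Hr y N) x)"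
  unfolding Hr_def sum.lessThan_Suc_shift
  by (simp add: Fr_0 Fr_Suc Pop_sum Pop_diff Pop_const)

definition Gr :: "state \<Rightarrow> nat \<Rightarrow> state \<Rightarrow> real" where
  "Gr y N x = (\<Sum>k\<le>N. real k * fpr y k x)"

lemma Gr_id: "Gr y N x = real N * Fr y N x - (\<Sum>k<N. Fr y k x)"
proof (induction N)
  case 0 then show ?case by (simp add: Gr_def)
next
  case (Suc N)
  have "Fr y (Suc N) x = Fr y N x + fpr y (Suc N) x" by (simp add: Fr_def)
  then show ?case using Suc by (simp add: Gr_def algebra_simps)
qed

lemma Gr_le_Hr: "Gr y N x \<le> Hr y N x"
proof -
  have "real N * Fr y N x \<le> real N" using Fr_le1[of y N x] by (simp add: mult_left_le)
  then show ?thesis by (simp add: Gr_id Hr_def sum_subtractf)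
qed

end


fun aft :: "real \<Rightarrow> nat list \<Rightarrow> nat list \<Rightarrow> real" where
  "aft v [] u = 0"
| "aft v (x#w) [] = 0"
| "aft v (x#w) (y#u) = (if x < y then v ^ length u else if y < x then 0 else aft v w u)"

fun vl :: "real \<Rightarrow> nat list \<Rightarrow> nat list \<Rightarrow> real" where
  "vl v [] u = v ^ length u"
| "vl v (x#w) [] = 0"
| "vl v (x#w) (y#u) = (if x < y then v ^ length u else if y < x then 0 else vl v w u)"

fun cv :: "real \<Rightarrow> real \<Rightarrow> nat list \<Rightarrow> nat list \<Rightarrow> real" where
  "cv v c [] [] = 0"
| "cv v c [] (y#u) = c * v ^ length u"
| "cv v c (x#w) [] = 0"
| "cv v c (x#w) (y#u) = (if x < y then v ^ length u else if y < x then 0 else cv v c w u)"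

lemma L1: "vl v (b @ [Suc j]) u = aft v (b @ [j]) u"
proof (induction b arbitrary: u)
  case Nil
  then show ?case by (cases u) auto
next
  case (Cons x b)
  then show ?case by (cases u) auto
qed

lemma L2: "\<forall>y\<in>set u. y \<le> m \<Longrightarrow> aft v (w @ [m]) u = aft v w u"
proof (induction w arbitrary: u)
  case Nil
  then show ?case by (cases u) auto
next
  case (Cons x w)
  then show ?case by (cases u) auto
qed

lemma L2': "\<forall>y\<in>set u. y \<le> m \<Longrightarrow> aft v (w @ replicate k m) u = aft v w u"
proof (induction k arbitrary: w)
  case 0 then show ?case by simp
next
  case (Suc k)
  have e: "w @ replicate (Suc k) m = (w @ replicate k m) @ [m]" by (simp add: replicate_append_same)
  have "aft v ((w @ replicate k m) @ [m]) u = aft v (w @ replicate k m) u" by (rule L2[OF Suc.prems])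
  then show ?case using Suc.IH[OF Suc.prems] e by simp
qed

lemma H_S: "w \<noteq> u \<Longrightarrow> p * cv (p*c) c w u + (1 - p) * aft (p*c) w u = vl (p*c) w u"
proof (induction w arbitrary: u)
  case Nil
  then obtain y u' where "u = y # u'" by (cases u) auto
  then show ?case by simp
next
  case (Cons x w)
  then show ?case by (cases u) (auto simp: algebra_simps)
qed

lemma H_C: "\<forall>y\<in>set u. 1 \<le> y \<Longrightarrow> c * vl v (w @ [1]) u + (1 - c) * aft v w u = cv v c w u"
proof (induction w arbitrary: u)
  case Nil
  then show ?case
  proof (cases u)
    case (Cons y u')
    then show ?thesis using Nil by (cases "y = 1") auto
  qed simp
next
  case (Cons x w)
  then show ?case by (cases u) (auto simp: algebra_simps)
qed

lemma vl_self: "vl v u u = 1"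
  by (induction u) auto

lemma vl_one:
  assumes "\<forall>y\<in>set a. 1 \<le> y" "1 \<le> i" shows "vl v [1] (a @ [i]) = v ^ length a"
proof (cases a)
  case Nil
  then show ?thesis using assms by (cases "i = 1") auto
next
  case (Cons y a')
  then show ?thesis using assms by (cases "y = 1") auto
qed

lemma bounds:
  assumes "0 \<le> v" "v \<le> 1" "0 \<le> c" "c \<le> 1"
  shows "0 \<le> aft v w u \<and> aft v w u \<le> 1" "0 \<le> vl v w u \<and> vl v w u \<le> 1"
    "0 \<le> cv v c w u \<and> cv v c w u \<le> 1"
proof -
  have pw: "0 \<le> v ^ n \<and> v ^ n \<le> 1" for n using assms by (simp add: power_le_one)
  have cpw: "c * v ^ n \<le> 1" for n using pw[of n] assms by (simp add: mult_le_one)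
  show "0 \<le> aft v w u \<and> aft v w u \<le> 1"
  proof (induction w arbitrary: u)
    case (Cons x w) then show ?case using pw by (cases u) auto
  qed simp
  show "0 \<le> vl v w u \<and> vl v w u \<le> 1"
  proof (induction w arbitrary: u)
    case (Cons x w) then show ?case using pw by (cases u) auto
  qed (simp add: pw)
  show "0 \<le> cv v c w u \<and> cv v c w u \<le> 1"
  proof (induction w arbitrary: u)
    case Nil then show ?case using pw cpw assms by (cases u) auto
  next
    case (Cons x w) then show ?case using pw by (cases u) auto
  qed
qed

lemma ret_decomp:
  assumes "set b \<subseteq> {1..r}"
  shows "(\<exists>k. b = replicate k r \<and> ret r b = Sharp) \<or>
         (\<exists>g c k. b = g @ [c] @ replicate k r \<and> 1 \<le> c \<and> c < r \<and> ret r b = S (Suc c) g)"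
proof -
  define tw where "tw = takeWhile (\<lambda>x. x = r) (rev b)"
  define d where "d = dropWhile (\<lambda>x. x = r) (rev b)"
  have rb: "rev b = tw @ d" unfolding tw_def d_def by simp
  have twr: "rev tw = replicate (length tw) r"
  proof -
    have "\<forall>x\<in>set (rev tw). x = r" unfolding tw_def by (auto dest: set_takeWhileD)
    from replicate_length_same[OF this] show ?thesis by simp
  qed
  have b: "b = rev d @ rev tw" using rb by (metis rev_append rev_rev_ident)
  show ?thesis
  proof (cases d)
    case Nil
    then have "ret r b = Sharp" unfolding ret_def d_def by simp
    then show ?thesis using b twr Nil by auto
  next
    case (Cons c d')
    have cr: "c \<noteq> r" using Cons unfolding d_def by (simp add: dropWhile_eq_Cons_conv)
    have "c \<in> set b" using b Cons by auto
    then have c: "1 \<le> c" "c \<le> r" using assms by auto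
    have "ret r b = S (Suc c) (rev d')" unfolding ret_def using Cons d_def[symmetric] by simp
    moreover have "b = rev d' @ [c] @ replicate (length tw) r" using b Cons twr by simp
    ultimately show ?thesis using c cr by auto
  qed
qed

context mc begin

definition valid :: "state \<Rightarrow> bool" where
  "valid x = (case x of Sharp \<Rightarrow> True | S j b \<Rightarrow> 1 \<le> j \<and> j \<le> r \<and> set b \<subseteq> {1..r}
     | C j b \<Rightarrow> 1 \<le> j \<and> j \<le> r \<and> set b \<subseteq> {1..r})"

lemma valid_ret: assumes "set b \<subseteq> {1..r}" shows "valid (ret r b)"
  using ret_decomp[OF assms]
proof
  assume "\<exists>k. b = replicate k r \<and> ret r b = Sharp"
  then show ?thesis by (auto simp: valid_def)
next
  assume "\<exists>g c k. b = g @ [c] @ replicate k r \<and> 1 \<le> c \<and> c < r \<and> ret r b = S (Suc c) g"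
  then obtain g c k where "b = g @ [c] @ replicate k r" "c < r" "ret r b = S (Suc c) g" by auto
  then show ?thesis using assms by (auto simp: valid_def)
qed

lemma valid_nxt: assumes "1 \<le> j" "j \<le> r" "set b \<subseteq> {1..r}" shows "valid (nxt r j b)"
proof (cases "j < r")
  case True then show ?thesis using assms by (auto simp: nxt_def valid_def)
next
  case False then show ?thesis using assms valid_ret by (simp add: nxt_def)
qed

lemma Pop_mono_valid:
  assumes "valid x" "\<And>z. valid z \<Longrightarrow> f z \<le> g z"
  shows "Pop f x \<le> Pop g x"
proof (cases x)
  case Sharp
  then show ?thesis using assms r1 by (simp add: Pop_def valid_def)
next
  case (S j b)
  then have v: "valid (C j b)" "valid (nxt r j b)" using assms valid_nxt by (auto simp: valid_def)
  show ?thesis using S p0 p1 assms(2)[OF v(1)] assms(2)[OF v(2)]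
    by (simp add: Pop_def add_mono mult_left_mono)
next
  case (C j b)
  then have v: "valid (S 1 (b @ [j]))" "valid (nxt r j b)" using assms valid_nxt by (auto simp: valid_def)
  show ?thesis using C c0 c1 assms(2)[OF v(1)] assms(2)[OF v(2)]
    by (simp add: Pop_def add_mono mult_left_mono)
qed

definition "K = (1 + p) / (1 - p * pc * real r)"
definition "T = K * real r"

lemma K_pos: "0 < K"
  using nr p0 by (simp add: K_def)

lemma K_eq: "K = 1 + p + p * pc * T"
  using nr by (simp add: K_def T_def field_simps)

definition anc :: "nat list \<Rightarrow> nat" where
  "anc b = sum_list (map (\<lambda>c. r - c) b)"

definition Df :: "state \<Rightarrow> real" where
  "Df x = (case x of Sharp \<Rightarrow> 0 | S j b \<Rightarrow> K * (real (r + 1 - j) + real (anc b))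
     | C j b \<Rightarrow> 1 + pc * T + K * (real (r - j) + real (anc b)))"

lemma Df_nonneg: "0 \<le> Df x"
  using K_pos c0 r1 by (auto simp: Df_def T_def split: state.split)

lemma anc_rep: "anc (replicate k r) = 0"
  by (induction k) (auto simp: anc_def)

lemma anc_app: "anc (a @ b) = anc a + anc b"
  by (simp add: anc_def)

lemma Df_nxt: "1 \<le> j \<Longrightarrow> j \<le> r \<Longrightarrow> set b \<subseteq> {1..r} \<Longrightarrow>
   Df (nxt r j b) = K * (real (r - j) + real (anc b))"
proof (cases "j < r")
  case True
  then show ?thesis by (simp add: nxt_def Df_def Suc_diff_Suc)
next
  case False
  assume a: "1 \<le> j" "j \<le> r" "set b \<subseteq> {1..r}"
  then have j: "j = r" using False by simp
  from ret_decomp[OF a(3)] show ?thesis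
  proof
    assume "\<exists>k. b = replicate k r \<and> ret r b = Sharp"
    then show ?thesis using j by (auto simp: nxt_def Df_def anc_rep)
  next
    assume "\<exists>g c k. b = g @ [c] @ replicate k r \<and> 1 \<le> c \<and> c < r \<and> ret r b = S (Suc c) g"
    then obtain g c k where "b = g @ [c] @ replicate k r" "c < r" "ret r b = S (Suc c) g" by auto
    then show ?thesis using j by (auto simp: nxt_def Df_def anc_rep anc_app) (simp add: anc_def algebra_simps)
  qed
qed

lemma Df_harm: assumes v: "valid x" and ns: "x \<noteq> Sharp" shows "Pop Df x = Df x - 1"
proof (cases x)
  case Sharp
  then show ?thesis using ns by simp
next
  case (S j b)
  from v have a: "1 \<le> j" "j \<le> r" "set b \<subseteq> {1..r}" using S by (auto simp: valid_def)
  have e: "real (r + 1 - j) = real (r - j) + 1" using a by simp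
  have P: "Pop Df x = p * Df (C j b) + (1 - p) * Df (nxt r j b)" by (simp add: Pop_def S)
  have DC: "Df (C j b) = 1 + pc * T + K * (real (r - j) + real (anc b))" by (simp add: Df_def)
  have DS: "Df x = K * (real (r - j) + 1 + real (anc b))" using e by (simp add: Df_def S)
  define Q where "Q = K * (real (r - j) + real (anc b))"
  have "Pop Df x = p * (1 + pc * T) + Q" unfolding P DC Df_nxt[OF a] Q_def by (simp add: algebra_simps)
  moreover have "Df x = K + Q" unfolding DS Q_def by (simp add: algebra_simps)
  ultimately show ?thesis using K_eq by (simp add: algebra_simps)
next
  case (C j b)
  from v have a: "1 \<le> j" "j \<le> r" "set b \<subseteq> {1..r}" using C by (auto simp: valid_def)
  have e: "anc (b @ [j]) = anc b + (r - j)" by (simp add: anc_def)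
  have P: "Pop Df x = pc * Df (S 1 (b @ [j])) + (1 - pc) * Df (nxt r j b)" by (simp add: Pop_def C)
  have DS: "Df (S 1 (b @ [j])) = K * real r + K * (real (r - j) + real (anc b))" using e by (simp add: Df_def algebra_simps)
  have DC: "Df x = 1 + pc * T + K * (real (r - j) + real (anc b))" by (simp add: Df_def C)
  show ?thesis unfolding P DS DC Df_nxt[OF a] T_def by (simp add: algebra_simps)
qed


definition phi :: "nat list \<Rightarrow> state \<Rightarrow> real" where
  "phi u x = (case x of Sharp \<Rightarrow> 0 | S j b \<Rightarrow> vl (p * pc) (b @ [j]) u
     | C j b \<Rightarrow> cv (p * pc) pc (b @ [j]) u)"

lemma nu_bounds: "0 \<le> p * pc" "p * pc \<le> 1"
  using p0 p1 c0 c1 by (auto simp: mult_le_one)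

lemma phi_bounds: "0 \<le> phi u x" "phi u x \<le> 1"
  using bounds[OF nu_bounds c0 c1] by (auto simp: phi_def split: state.split)

lemma phi_nxt:
  assumes a: "1 \<le> j" "j \<le> r" "set b \<subseteq> {1..r}" and u: "set u \<subseteq> {1..r}"
  shows "phi u (nxt r j b) = aft (p * pc) (b @ [j]) u"
proof (cases "j < r")
  case True
  then show ?thesis using L1[of "p*pc" b j u] by (simp add: nxt_def phi_def)
next
  case False
  then have j: "j = r" using a by simp
  have ur: "\<forall>y\<in>set u. y \<le> r" using u by auto
  from ret_decomp[OF a(3)] show ?thesis
  proof
    assume "\<exists>k. b = replicate k r \<and> ret r b = Sharp"
    then obtain k where k: "b = replicate k r" "ret r b = Sharp" by auto
    have "aft (p * pc) (b @ [j]) u = aft (p * pc) ([] @ replicate (Suc k) r) u"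
      using k j by (simp add: replicate_append_same)
    also have "\<dots> = aft (p * pc) [] u" by (rule L2'[OF ur])
    also have "\<dots> = 0" by simp
    finally show ?thesis using k j by (simp add: nxt_def phi_def)
  next
    assume "\<exists>g c k. b = g @ [c] @ replicate k r \<and> 1 \<le> c \<and> c < r \<and> ret r b = S (Suc c) g"
    then obtain g c k where k: "b = g @ [c] @ replicate k r" "ret r b = S (Suc c) g" by auto
    have "aft (p * pc) (b @ [j]) u = aft (p * pc) ((g @ [c]) @ replicate (Suc k) r) u"
      using k j by (simp add: replicate_append_same)
    also have "\<dots> = aft (p * pc) (g @ [c]) u" by (rule L2'[OF ur])
    also have "\<dots> = vl (p * pc) (g @ [Suc c]) u" by (rule L1[symmetric])
    finally show ?thesis using k j by (simp add: nxt_def phi_def)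
  qed
qed

lemma phi_harm:
  assumes v: "valid x" and ns: "x \<noteq> Sharp" and ny: "x \<noteq> S i a" and u: "set (a @ [i]) \<subseteq> {1..r}"
  shows "Pop (phi (a @ [i])) x = phi (a @ [i]) x"
proof (cases x)
  case Sharp
  then show ?thesis using ns by simp
next
  case (S j b)
  from v have aa: "1 \<le> j" "j \<le> r" "set b \<subseteq> {1..r}" using S by (auto simp: valid_def)
  have ne: "b @ [j] \<noteq> a @ [i]" using ny S by auto
  have "Pop (phi (a @ [i])) x = p * cv (p * pc) pc (b @ [j]) (a @ [i]) + (1 - p) * aft (p * pc) (b @ [j]) (a @ [i])"
    using phi_nxt[OF aa u] by (simp add: Pop_def S phi_def)
  also have "\<dots> = vl (p * pc) (b @ [j]) (a @ [i])" by (rule H_S[OF ne])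
  finally show ?thesis by (simp add: S phi_def)
next
  case (C j b)
  from v have aa: "1 \<le> j" "j \<le> r" "set b \<subseteq> {1..r}" using C by (auto simp: valid_def)
  have u1: "\<forall>y\<in>set (a @ [i]). 1 \<le> y" using u by auto
  have "Pop (phi (a @ [i])) x = pc * vl (p * pc) ((b @ [j]) @ [1]) (a @ [i]) + (1 - pc) * aft (p * pc) (b @ [j]) (a @ [i])"
    using phi_nxt[OF aa u] by (simp add: Pop_def C phi_def)
  also have "\<dots> = cv (p * pc) pc (b @ [j]) (a @ [i])" by (rule H_C[OF u1])
  finally show ?thesis by (simp add: C phi_def)
qed

end


lemma real_pick:
  fixes av x :: real
  assumes av: "0 < av" "av \<le> 1" and h: "\<And>M::nat. 1 \<le> M \<Longrightarrow> real M * (1 - av * (real M - 1)) \<le> x"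
  shows "1 / (8 * av) \<le> x"
proof (cases "av \<ge> 1/4")
  case True
  have "1 \<le> x" using h[of 1] by simp
  moreover have "1 / (8 * av) \<le> 1" using True av by (simp add: divide_simps)
  ultimately show ?thesis by linarith
next
  case False
  define M where "M = nat \<lfloor>1 / (2 * av)\<rfloor>"
  have big: "2 < 1 / (2 * av)" using False av by (simp add: divide_simps)
  have M1: "real M \<le> 1 / (2 * av)" "1 / (2 * av) - 1 < real M" unfolding M_def using big by linarith+
  then have M2: "1 \<le> M" using big by linarith
  have "av * real M \<le> av * (1 / (2 * av))" by (rule mult_left_mono) (use M1 av in auto)
  also have "\<dots> = 1/2" using av by simp
  finally have am: "av * real M \<le> 1/2" .
  have "av * (real M - 1) = av * real M - av" by (simp add: algebra_simps)
  then have "1/2 \<le> 1 - av * (real M - 1)" using am av by linarith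
  then have "real M * (1/2) \<le> real M * (1 - av * (real M - 1))" by (rule mult_left_mono) simp
  also have "\<dots> \<le> x" using h[OF M2] .
  finally have "real M / 2 \<le> x" by simp
  moreover have "1 / (8 * av) \<le> (1 / (2 * av) - 1) / 2" using False av by (simp add: divide_simps)
  moreover have "(1 / (2 * av) - 1) / 2 \<le> real M / 2" using M1(2) by simp
  ultimately show ?thesis by (meson order_trans)
qed

context mc begin

lemma Pop_V: "Pop (\<lambda>z. Df z + H * (1 - phi u z)) x = Pop Df x + H * (1 - Pop (phi u) x)"
  using p0 p1 c0 c1 by (auto simp: Pop_def algebra_simps split: state.split)

lemma Pop_shift: "Pop (\<lambda>z. f z + c) x = Pop f x + c"
  by (auto simp: Pop_def algebra_simps split: state.split)

lemma T_nonneg: "0 \<le> T" using K_pos by (simp add: T_def)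

context
  fixes a :: "nat list" and i :: nat
  assumes a: "set a \<subseteq> {1..r}" "1 \<le> i" "i \<le> r"
begin

lemma u_set: "set (a @ [i]) \<subseteq> {1..r}" using a by auto

lemma phi_Sharp1: "phi (a @ [i]) (S 1 []) = (p * pc) ^ length a"
proof -
  have "\<forall>y\<in>set a. 1 \<le> y" using a by auto
  then show ?thesis using vl_one[of a i "p*pc"] a by (simp add: phi_def)
qed

lemma phi_y: "phi (a @ [i]) (S i a) = 1"
  by (simp add: phi_def vl_self)

lemma lower_F: "valid x \<Longrightarrow> Fr (S i a) N x \<le> phi (a @ [i]) x + (p * pc) ^ length a * real N"
proof (induction N arbitrary: x)
  case 0
  then show ?case using phi_bounds[of "a @ [i]" x] phi_y by (auto simp: Fr_0)
next
  case (Suc N)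
  have av0: "0 \<le> (p * pc) ^ length a" using nu_bounds by simp
  show ?case
  proof (cases "x = S i a")
    case True
    then show ?thesis using phi_y av0 by (simp add: Fr_Suc)
  next
    case False
    have "Fr (S i a) (Suc N) x = Pop (Fr (S i a) N) x" using False by (simp add: Fr_Suc)
    also have "\<dots> \<le> Pop (\<lambda>z. phi (a @ [i]) z + (p * pc) ^ length a * real N) x"
      by (rule Pop_mono_valid[OF Suc.prems Suc.IH])
    also have "\<dots> = Pop (phi (a @ [i])) x + (p * pc) ^ length a * real N" by (rule Pop_shift)
    also have "\<dots> \<le> phi (a @ [i]) x + (p * pc) ^ length a * real (Suc N)"
    proof (cases "x = Sharp")
      case True
      then show ?thesis using phi_Sharp1 by (simp add: Pop_def phi_def algebra_simps)
    next
      case ns: False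
      have "Pop (phi (a @ [i])) x = phi (a @ [i]) x" by (rule phi_harm[OF Suc.prems ns False u_set])
      moreover have "(p * pc) ^ length a * real N \<le> (p * pc) ^ length a * real (Suc N)"
        by (rule mult_left_mono) (use av0 in simp_all)
      ultimately show ?thesis by simp
    qed
    finally show ?thesis .
  qed
qed

lemma upper_H:
  assumes av: "0 < (p * pc) ^ length a" and v: "valid x"
  shows "Hr (S i a) N x \<le> Df x + ((1 + T) / (p * pc) ^ length a) * (1 - phi (a @ [i]) x)"
  using v
proof (induction N arbitrary: x)
  case 0
  have "0 \<le> (1 + T) / (p * pc) ^ length a" using av T_nonneg by simp
  then have "0 \<le> ((1 + T) / (p * pc) ^ length a) * (1 - phi (a @ [i]) x)"
    using phi_bounds[of "a @ [i]" x] by (intro mult_nonneg_nonneg) auto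
  then show ?case using Df_nonneg[of x] by (simp add: Hr_def)
next
  case (Suc N)
  define H where "H = (1 + T) / (p * pc) ^ length a"
  have H0: "0 \<le> H" using av T_nonneg by (simp add: H_def)
  show ?case
  proof (cases "x = S i a")
    case True
    then show ?thesis using Df_nonneg[of x] by (simp add: Hr_Suc phi_y)
  next
    case False
    have "Hr (S i a) (Suc N) x = 1 + Pop (Hr (S i a) N) x" using False by (simp add: Hr_Suc)
    also have "\<dots> \<le> 1 + Pop (\<lambda>z. Df z + H * (1 - phi (a @ [i]) z)) x"
      using Pop_mono_valid[OF Suc.prems Suc.IH] by (simp add: H_def)
    also have "\<dots> = 1 + Pop Df x + H * (1 - Pop (phi (a @ [i])) x)" by (simp add: Pop_V)
    also have "\<dots> = Df x + H * (1 - phi (a @ [i]) x)"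
    proof (cases "x = Sharp")
      case True
      have "Pop Df x = T" using True r1 by (simp add: Pop_def Df_def anc_def T_def)
      moreover have "Pop (phi (a @ [i])) x = (p * pc) ^ length a" using True phi_Sharp1 by (simp add: Pop_def)
      moreover have "H * (p * pc) ^ length a = 1 + T"
      proof -
        have g: "\<And>q::real. 0 < q \<Longrightarrow> (1 + T) / q * q = 1 + T" by simp
        show ?thesis unfolding H_def by (rule g[OF av])
      qed
      ultimately show ?thesis using True by (simp add: Df_def phi_def algebra_simps)
    next
      case ns: False
      show ?thesis using phi_harm[OF Suc.prems ns False u_set] Df_harm[OF Suc.prems ns] by simp
    qed
    finally show ?thesis by (simp add: H_def)
  qed
qed


lemma valid_Sharp: "valid Sharp" by (simp add: valid_def)

lemma fp_Sharp: "fp r p pc n Sharp (S i a) = ennreal (fpr (S i a) n Sharp)"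
  by (rule fp_eq)

lemma partial_F: "(\<Sum>k<Suc N. ennreal (fpr (S i a) k Sharp)) = ennreal (Fr (S i a) N Sharp)"
  by (simp add: Fr_def fpr_nonneg lessThan_Suc_atMost)

lemma partial_G: "(\<Sum>k<N. of_nat k * ennreal (fpr (S i a) k Sharp)) = ennreal (\<Sum>k<N. real k * fpr (S i a) k Sharp)"
proof -
  have "(\<Sum>k<N. of_nat k * ennreal (fpr (S i a) k Sharp)) = (\<Sum>k<N. ennreal (real k * fpr (S i a) k Sharp))"
    by (intro sum.cong refl) (simp add: ennreal_of_nat_eq_real_of_nat ennreal_mult fpr_nonneg)
  also have "\<dots> = ennreal (\<Sum>k<N. real k * fpr (S i a) k Sharp)"
    by (rule sum_ennreal) (simp add: fpr_nonneg)
  finally show ?thesis .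
qed

lemma sumF_le: "ennreal (Fr (S i a) N Sharp) \<le> (\<Sum>n. ennreal (fpr (S i a) n Sharp))"
  unfolding partial_F[symmetric] by (rule sum_le_suminf) auto

lemma main_bounds:
  shows "ennreal (1/8) * inverse (ennreal (p * pc)) ^ length a \<le> hit_time r p pc Sharp (S i a) \<and>
         hit_time r p pc Sharp (S i a) \<le> ennreal (1 + T) * inverse (ennreal (p * pc)) ^ length a"
proof -
  define av where "av = (p * pc) ^ length a"
  define y where "y = S i a"
  define X where "X = (\<Sum>n. of_nat n * ennreal (fpr y n Sharp))"
  define Sm where "Sm = (\<Sum>n. ennreal (fpr y n Sharp))"
  have ht: "hit_time r p pc Sharp y = X + (if Sm < 1 then \<infinity> else 0)"
    unfolding hit_time_def X_def Sm_def fp_Sharp y_def ..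
  have av0: "0 \<le> av" using nu_bounds by (simp add: av_def)
  have av1: "av \<le> 1" using nu_bounds by (simp add: av_def power_le_one)
  have lowF: "Fr y N Sharp \<le> av * real N" for N
    using lower_F[OF valid_Sharp, of N] by (simp add: phi_def av_def y_def)
  show ?thesis
  proof (cases "av = 0")
    case True
    then have len: "length a > 0" and nu0: "p * pc = 0" unfolding av_def by (auto simp: power_0_left split: if_splits)
    have "fpr y n Sharp = 0" for n
    proof -
      have "Fr y n Sharp \<le> 0" using lowF[of n] True by simp
      moreover have "fpr y n Sharp \<le> Fr y n Sharp" unfolding Fr_def
        by (rule member_le_sum) (auto simp: fpr_nonneg)
      ultimately show ?thesis using fpr_nonneg[of y n Sharp] by linarith
    qed
    then have "Sm = 0" by (simp add: Sm_def)
    then have "hit_time r p pc Sharp y = \<infinity>" using ht by simp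
    moreover have "inverse (ennreal (p * pc)) ^ length a = top" using len by (simp add: nu0 del: mult_eq_0_iff)
    moreover have "ennreal (1 + T) \<noteq> 0" using T_nonneg by simp
    ultimately show ?thesis by (simp add: y_def)
  next
    case False
    then have avp: "0 < av" using av0 by simp
    have inv: "inverse (ennreal (p * pc)) ^ length a = ennreal (1 / av)"
    proof (cases "length a = 0")
      case True then show ?thesis by (simp add: av_def)
    next
      case False
      then have "0 < p * pc" using avp nu_bounds unfolding av_def by (metis less_eq_real_def power_0_left)
      then have e1: "inverse (ennreal (p * pc)) = ennreal (inverse (p * pc))" by (rule inverse_ennreal)
      have e2: "ennreal (inverse (p * pc)) ^ length a = ennreal (inverse (p * pc) ^ length a)"
        by (rule ennreal_power) (use \<open>0 < p * pc\<close> in \<open>simp only: inverse_nonnegative_iff_nonnegative less_imp_le\<close>)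
      show ?thesis unfolding e1 e2 av_def by (simp only: power_inverse inverse_eq_divide[symmetric])
    qed
    define H where "H = (1 + T) / av"
    have Hb: "Hr y N Sharp \<le> H" for N
      using upper_H[OF _ valid_Sharp, of N] avp by (simp add: H_def av_def y_def Df_def phi_def)
    have Sm1: "\<not> Sm < 1"
    proof
      assume "Sm < 1"
      note sl = this
      have "Sm \<noteq> top" using sl by (metis ennreal_1 ennreal_less_top order.strict_trans order.strict_iff_not)
      then obtain s where s0: "Sm = ennreal s" "0 \<le> s" by (cases Sm) auto
      have "ennreal s < ennreal 1" using sl s0 by simp
      then have "s < 1" using s0(2) by (simp add: ennreal_less_iff)
      note s = s0 this
      have Fs: "Fr y k Sharp \<le> s" for k
        using sumF_le[of k] s unfolding Sm_def y_def by simp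
      obtain N :: nat where N: "H / (1 - s) < real N" using reals_Archimedean2 by blast
      have "real N * (1 - s) \<le> Hr y N Sharp"
      proof -
        have "(\<Sum>k<N. 1 - s) \<le> (\<Sum>k<N. 1 - Fr y k Sharp)" by (rule sum_mono) (use Fs in auto)
        then show ?thesis by (simp add: Hr_def)
      qed
      also have "\<dots> \<le> H" by (rule Hb)
      finally have "real N * (1 - s) \<le> H" .
      moreover have "H < real N * (1 - s)" using N s by (simp add: divide_less_eq)
      ultimately show False by simp
    qed
    have Xle: "X \<le> ennreal H"
    proof -
      have "(\<Sum>k<N. of_nat k * ennreal (fpr y k Sharp)) \<le> ennreal H" for N
      proof -
        have "(\<Sum>k<N. real k * fpr y k Sharp) \<le> Gr y N Sharp"
          unfolding Gr_def by (rule sum_mono2) (auto simp: fpr_nonneg)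
        also have "\<dots> \<le> Hr y N Sharp" by (rule Gr_le_Hr)
        also have "\<dots> \<le> H" by (rule Hb)
        finally have "(\<Sum>k<N. real k * fpr y k Sharp) \<le> H" .
        then show ?thesis using partial_G[of N] unfolding y_def by (simp add: ennreal_leI)
      qed
      then show ?thesis unfolding X_def suminf_eq_SUP by (intro SUP_least) auto
    qed
    have upper: "hit_time r p pc Sharp y \<le> ennreal (1 + T) * inverse (ennreal (p * pc)) ^ length a"
    proof -
      have "hit_time r p pc Sharp y = X" using ht Sm1 by simp
      also have "\<dots> \<le> ennreal H" by (rule Xle)
      also have "\<dots> = ennreal (1 + T) * ennreal (1 / av)"
      proof -
        have e: "H = (1 + T) * (1 / av)" unfolding H_def by simp
        show ?thesis unfolding e by (rule ennreal_mult) (use T_nonneg avp in auto)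
      qed
      finally show ?thesis using inv by simp
    qed
    have lower: "ennreal (1/8) * inverse (ennreal (p * pc)) ^ length a \<le> hit_time r p pc Sharp y"
    proof (cases "Sm < 1")
      case True
      then show ?thesis using ht by simp
    next
      case False
      then have Sm1': "1 \<le> Sm" by simp
      have key: "ennreal (real M) \<le> X + ennreal (real M * (av * (real M - 1)))" if M1: "1 \<le> M" for M :: nat
      proof -
        have pt: "ennreal (real M) * ennreal (fpr y n Sharp) \<le> of_nat n * ennreal (fpr y n Sharp) +
             (if n < M then ennreal (real M) * ennreal (fpr y n Sharp) else 0)" for n
        proof (cases "n < M")
          case True then show ?thesis by simp
        next
          case False
          then have "ennreal (real M) \<le> of_nat n" by (simp add: ennreal_of_nat_eq_real_of_nat)
          then show ?thesis using False by (simp add: mult_right_mono)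
        qed
        have "ennreal (real M) * Sm = (\<Sum>n. ennreal (real M) * ennreal (fpr y n Sharp))"
          unfolding Sm_def by simp
        also have "\<dots> \<le> (\<Sum>n. of_nat n * ennreal (fpr y n Sharp) +
             (if n < M then ennreal (real M) * ennreal (fpr y n Sharp) else 0))"
          by (rule suminf_le[OF pt]) auto
        also have "\<dots> = X + (\<Sum>n. (if n < M then ennreal (real M) * ennreal (fpr y n Sharp) else 0))"
          unfolding X_def by (rule suminf_add[symmetric]) auto
        also have "(\<Sum>n. (if n < M then ennreal (real M) * ennreal (fpr y n Sharp) else (0::ennreal)))
             = (\<Sum>n<M. (if n < M then ennreal (real M) * ennreal (fpr y n Sharp) else 0))"
          by (rule suminf_finite) auto
        also have "\<dots> = (\<Sum>n<M. ennreal (real M) * ennreal (fpr y n Sharp))"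
          by (rule sum.cong) auto
        also have "\<dots> = ennreal (real M) * (\<Sum>n<Suc (M - 1). ennreal (fpr y n Sharp))"
          using M1 by (simp add: sum_distrib_left)
        also have "\<dots> = ennreal (real M) * ennreal (Fr y (M - 1) Sharp)"
          using partial_F[of "M - 1"] unfolding y_def by (simp only:)
        also have "\<dots> = ennreal (real M * Fr y (M - 1) Sharp)"
          by (rule ennreal_mult[symmetric]) (auto simp: Fr_nonneg)
        also have "\<dots> \<le> ennreal (real M * (av * (real M - 1)))"
          using lowF[of "M - 1"] M1 by (intro ennreal_leI mult_left_mono) (auto simp: of_nat_diff)
        finally have "ennreal (real M) * Sm \<le> X + ennreal (real M * (av * (real M - 1)))" by simp
        moreover have "ennreal (real M) \<le> ennreal (real M) * Sm"
          using mult_left_mono[OF Sm1', of "ennreal (real M)"] by simp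
        ultimately show ?thesis by (rule order_trans[rotated])
      qed
      show ?thesis
      proof (cases "X = top")
        case True then show ?thesis using ht by simp
      next
        case Xf: False
        then obtain x where x: "X = ennreal x" "0 \<le> x" by (cases X) auto
        have "real M * (1 - av * (real M - 1)) \<le> x" if "1 \<le> M" for M :: nat
        proof -
          have B0: "0 \<le> real M * (av * (real M - 1))" using that avp by simp
          have "ennreal x + ennreal (real M * (av * (real M - 1))) = ennreal (x + real M * (av * (real M - 1)))"
            by (rule ennreal_plus[symmetric]) (use x B0 in auto)
          then have "ennreal (real M) \<le> ennreal (x + real M * (av * (real M - 1)))"
            using key[OF that] x by simp
          then have "real M \<le> x + real M * (av * (real M - 1))"
            by (rule ennreal_le_iff[THEN iffD1, rotated]) (use x B0 in simp)
          then show ?thesis by (simp add: algebra_simps)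
        qed
        then have "1 / (8 * av) \<le> x" by (intro real_pick[OF avp av1]) auto
        then have "ennreal (1/8 * (1 / av)) \<le> ennreal x" by (intro ennreal_leI) simp
        moreover have "ennreal (1/8 * (1 / av)) = ennreal (1/8) * ennreal (1 / av)"
          by (rule ennreal_mult) (use avp in auto)
        ultimately have "ennreal (1/8) * ennreal (1 / av) \<le> ennreal x" by simp
        also have "\<dots> \<le> hit_time r p pc Sharp y" using ht x by simp
        finally show ?thesis using inv by simp
      qed
    qed
    show ?thesis using upper lower by (simp add: y_def)
  qed
qed

end
end

theorem corollary3p6:
  fixes r :: nat and p pc :: real
  assumes "r \<ge> 1" and "0 \<le> p" and "p \<le> 1" and "0 \<le> pc" and "pc \<le> 1"
    and "p * pc * real r < 1"
  shows "\<exists>c1 c2 :: real. 0 < c1 \<and> c1 \<le> c2 \<and>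
    (\<forall>\<alpha> i. set \<alpha> \<subseteq> {1..r} \<longrightarrow> 1 \<le> i \<longrightarrow> i \<le> r \<longrightarrow>
       ennreal c1 * inverse (ennreal (p * pc)) ^ length \<alpha> \<le> hit_time r p pc Sharp (S i \<alpha>) \<and>
       hit_time r p pc Sharp (S i \<alpha>) \<le> ennreal c2 * inverse (ennreal (p * pc)) ^ length \<alpha>)"
proof -
  interpret mc r p pc using assms by unfold_locales
  have "(1::real) / 8 \<le> 1 + T" using T_nonneg by simp
  moreover have "\<forall>\<alpha> i. set \<alpha> \<subseteq> {1..r} \<longrightarrow> 1 \<le> i \<longrightarrow> i \<le> r \<longrightarrow>
       ennreal (1/8) * inverse (ennreal (p * pc)) ^ length \<alpha> \<le> hit_time r p pc Sharp (S i \<alpha>) \<and>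
       hit_time r p pc Sharp (S i \<alpha>) \<le> ennreal (1 + T) * inverse (ennreal (p * pc)) ^ length \<alpha>"
    using main_bounds by blast
  ultimately show ?thesis by (intro exI[of _ "1/8"] exI[of _ "1 + T"]) auto
qed

end
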